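(* Let $a > 3$ be irrational and let $t$ be a positive integer. Define \[ U = \#\left\{(x,y)\in\mathbb{Z}^2 : x \ge 0,\ x + a y \ge \tfrac{t(a+3)}{12},\ x + 3y \le \tfrac{t}{2}\right\}, \] \[ D = \#\left\{(x,y)\in\mathbb{Z}^2 : y \ge 0,\ x + 3y \ge \tfrac{t}{2},\ x + a y \le \tfrac{t(a+3)}{12}\right\}. \] Then $U \le D$. Moreover, if $t \equiv 4 \pmod{12}$, then $U \le D - 1$.
   Context: Geometrically, $U$ counts lattice points in the region bounded by the $y$-axis, the line $L_1: \frac{12}{a+3}x + \frac{12a}{a+3}y = t$ and the line $L_2: 2x+6y=t$ (lying above $L_1$ and on or below $L_2$), and $D$ counts lattice points in the region bounded by $L_1$, $L_2$ and the $x$-axis (on or above $L_2$ and below $L_1$); the lines $L_1$, $L_2$ meet at $(t/4, t/12)$. *)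

theory Defs
  imports Complex_Main
begin

definition U_count :: "real \<Rightarrow> nat \<Rightarrow> nat" where
  "U_count a t = card {(x::int, y::int). 0 \<le> x \<and>
      real_of_int x + a * real_of_int y \<ge> real t * (a + 3) / 12 \<and>
      real_of_int x + 3 * real_of_int y \<le> real t / 2}"

definition D_count :: "real \<Rightarrow> nat \<Rightarrow> nat" where
  "D_count a t = card {(x::int, y::int). 0 \<le> y \<and>
      real_of_int x + 3 * real_of_int y \<ge> real t / 2 \<and>
      real_of_int x + a * real_of_int y \<le> real t * (a + 3) / 12}"

end

theory Submission
  imports Defs
begin

theorem lemma2p9:
  fixes a :: real and t :: nat
  assumes "a > 3" and "a \<notin> \<rat>" and "t > 0"
  shows "U_count a t \<le> D_count a t \<and>
         (t mod 12 = 4 \<longrightarrow> int (U_count a t) \<le> int (D_count a t) - 1)"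
proof -
  define SU where "SU = {(x::int, y::int). 0 \<le> x \<and>
      real_of_int x + a * real_of_int y \<ge> real t * (a + 3) / 12 \<and>
      real_of_int x + 3 * real_of_int y \<le> real t / 2}"
  define SD where "SD = {(x::int, y::int). 0 \<le> y \<and>
      real_of_int x + 3 * real_of_int y \<ge> real t / 2 \<and>
      real_of_int x + a * real_of_int y \<le> real t * (a + 3) / 12}"
  define q where "q = int t div 6"
  define p where "p = int t - 3 * q"
  define f where "f = (\<lambda>(x::int, y::int). (p - x, q - y))"
  have q6: "6 * q \<le> int t" unfolding q_def by simp
  have q6r: "6 * real_of_int q \<le> real t" using q6
    by (metis of_int_le_iff of_int_mult of_int_numeral of_int_of_nat_eq)
  have pq: "real_of_int p + 3 * real_of_int q = real t" unfolding p_def by simp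
  have pa: "real_of_int p + a * real_of_int q \<le> real t * (a + 3) / 6"
  proof -
    have "0 \<le> (a - 3) * (real t / 6 - real_of_int q)"
      using assms(1) q6r by (intro mult_nonneg_nonneg) auto
    moreover have "(a - 3) * (real t / 6 - real_of_int q) = a * real t / 6 - a * real_of_int q - real t / 2 + 3 * real_of_int q"
      by (simp add: field_simps)
    ultimately have "0 \<le> a * real t / 6 - a * real_of_int q - real t / 2 + 3 * real_of_int q" by simp
    moreover have "real t * (a + 3) / 6 = a * real t / 6 + real t / 2" by (simp add: algebra_simps)
    ultimately show ?thesis using pq by linarith
  qed
  have fin: "finite SD"
  proof -
    define N where "N = ceiling (real t * (a + 3) / 12)"
    have "SD \<subseteq> {0..N} \<times> {0..int t}"
    proof
      fix z assume "z \<in> SD"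
      then obtain x y where z: "z = (x, y)" and y0: "0 \<le> y"
        and h1: "real_of_int x + 3 * real_of_int y \<ge> real t / 2"
        and h2: "real_of_int x + a * real_of_int y \<le> real t * (a + 3) / 12"
        unfolding SD_def by auto
      have "(a - 3) * real_of_int y \<le> (a - 3) * (real t / 12)"
        using h1 h2 by (simp add: algebra_simps)
      hence yc: "real_of_int y \<le> real t / 12" using assms(1) by simp
      have x0: "0 \<le> real_of_int x" using h1 yc by linarith
      have "a * real_of_int y \<ge> 0" using assms(1) y0 by simp
      hence "real_of_int x \<le> real t * (a + 3) / 12" using h2 by linarith
      hence "x \<le> N" unfolding N_def by (simp add: le_ceiling_iff)
      moreover have "y \<le> int t" using yc by linarith
      ultimately show "z \<in> {0..N} \<times> {0..int t}" using z y0 x0 by auto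
    qed
    then show ?thesis by (rule finite_subset) auto
  qed
  have img: "f ` SU \<subseteq> SD"
  proof
    fix w assume "w \<in> f ` SU"
    then obtain x y where xy: "(x, y) \<in> SU" and w: "w = (p - x, q - y)"
      unfolding f_def by auto
    have x0: "0 \<le> x"
      and h1: "real_of_int x + a * real_of_int y \<ge> real t * (a + 3) / 12"
      and h2: "real_of_int x + 3 * real_of_int y \<le> real t / 2"
      using xy unfolding SU_def by auto
    have "real_of_int (6 * y) \<le> real t" using x0 h2 by simp
    hence "6 * y \<le> int t" by linarith
    hence yq: "y \<le> q" unfolding q_def by linarith
    have "real_of_int (p - x) + 3 * real_of_int (q - y) \<ge> real t / 2"
      using pq h2 by simp
    moreover have "real_of_int (p - x) + a * real_of_int (q - y) \<le> real t * (a + 3) / 12"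
      using pa h1 by (simp add: algebra_simps)
    ultimately show "w \<in> SD" using yq w unfolding SD_def by auto
  qed
  have inj: "inj_on f SU" unfolding f_def inj_on_def by auto
  have cardle: "card SU \<le> card SD"
    using card_inj_on_le[OF inj img fin] .
  have part2: "int (card SU) \<le> int (card SD) - 1" if t4: "t mod 12 = 4"
  proof -
    define k where "k = int t div 12"
    have "int t mod 12 = 4" using t4 by (metis of_nat_mod of_nat_numeral)
    hence tk: "int t = 12 * k + 4" unfolding k_def by presburger
    have qk: "q = 2 * k" unfolding q_def using tk by presburger
    have pk: "p = 6 * k + 4" unfolding p_def using tk qk by linarith
    have k0: "0 \<le> k" unfolding k_def by simp
    have tr: "real t = 12 * real_of_int k + 4" using tk
      by (metis of_int_add of_int_mult of_int_numeral of_int_of_nat_eq)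
    have mem: "(3 * k + 2, k) \<in> SD"
      unfolding SD_def using k0 tr assms(1) by (auto simp: algebra_simps)
    have notin: "(3 * k + 2, k) \<notin> f ` SU"
    proof
      assume "(3 * k + 2, k) \<in> f ` SU"
      then obtain x y where xy: "(x, y) \<in> SU" and e: "(3 * k + 2, k) = (p - x, q - y)"
        unfolding f_def by auto
      have h1: "real_of_int x + a * real_of_int y \<ge> real t * (a + 3) / 12"
        and h2: "real_of_int x + 3 * real_of_int y \<le> real t / 2"
        using xy unfolding SU_def by auto
      have e1: "(a - 3) * real_of_int y - (a - 3) * (real t / 12) = (real_of_int x + a * real_of_int y - real t * (a + 3) / 12) + (real t / 2 - (real_of_int x + 3 * real_of_int y))"
        by (simp add: field_simps)
      have "(a - 3) * real_of_int y \<ge> (a - 3) * (real t / 12)"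
        using h1 h2 e1 by linarith
      hence "real_of_int y \<ge> real t / 12" using assms(1) by simp
      hence "real_of_int y > real_of_int k" using tr by linarith
      hence "y > k" by simp
      moreover have "y = k" using e qk by simp
      ultimately show False by simp
    qed
    have "f ` SU \<subseteq> SD - {(3 * k + 2, k)}" using img notin by auto
    hence "card (f ` SU) \<le> card (SD - {(3 * k + 2, k)})"
      using fin by (intro card_mono) auto
    also have "\<dots> = card SD - 1" using mem fin by simp
    finally have "card SU \<le> card SD - 1" using card_image[OF inj] by simp
    moreover have "card SD \<ge> 1" using mem fin
      by (metis One_nat_def Suc_leI card_gt_0_iff empty_iff)
    ultimately show ?thesis by linarith
  qed
  show ?thesis unfolding U_count_def D_count_def
    using cardle part2 unfolding SU_def SD_def by blast
qed

end
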